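(* Let $q\in\mathbb C_p$ with $|1-q|_p<p^{-1/(p-1)}$ ($p$ an odd prime). For $m,n\in\mathbb Z_+$ with $m\le n$, $$\binom nm(q-1)^m=\sum_{k=m}^n(q-1)^k\binom nk_q s_{1,q}(k,m).$$
   Context: $[x]_q=\frac{1-q^x}{1-q}$; $[n]_q!=[n]_q\cdots[1]_q$ ($[0]_q!=1$), $\binom nk_q=\frac{[n]_q!}{[k]_q![n-k]_q!}$. The $q$-Stirling numbers of the first kind $s_{1,q}(k,l)$ are defined by $[x]_q[x-1]_q\cdots[x-k+1]_q=q^{-\binom k2}\sum_{l=0}^k s_{1,q}(k,l)[x]_q^l$ for $k\in\mathbb Z_+$, as an identity of polynomials in $[x]_q$ (using $[x-i]_q=q^{-i}([x]_q-[i]_q)$). *)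

theory Defs
  imports "HOL-Computational_Algebra.Polynomial" "HOL-Computational_Algebra.Primes"
begin

text \<open>An absolute value v on a field 'a which makes it a model of C_p:
  characteristic 0, nonarchimedean, normalised by v p = 1/p, complete and
  algebraically closed.  C_p is such a field; the theorem is stated for every such field.\<close>

definition Cp_like :: "nat \<Rightarrow> ('a::field \<Rightarrow> real) \<Rightarrow> bool" where
  "Cp_like p v \<longleftrightarrow>
     CHAR('a) = 0 \<and>
     (\<forall>x. v x \<ge> 0) \<and> (\<forall>x. v x = 0 \<longleftrightarrow> x = 0) \<and>
     (\<forall>x y. v (x * y) = v x * v y) \<and>
     (\<forall>x y. v (x + y) \<le> max (v x) (v y)) \<and>
     v (of_nat p) = 1 / real p \<and>
     (\<forall>X :: nat \<Rightarrow> 'a. (\<forall>e>0. \<exists>N. \<forall>a\<ge>N. \<forall>b\<ge>N. v (X a - X b) < e) \<longrightarrow>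
          (\<exists>L. \<forall>e>0. \<exists>N. \<forall>n\<ge>N. v (X n - L) < e)) \<and>
     (\<forall>P :: 'a poly. degree P > 0 \<longrightarrow> (\<exists>x. poly P x = 0))"

text \<open>q-integer [n]_q = (1-q^n)/(1-q) = 1 + q + ... + q^(n-1) (also valid at q = 1).\<close>
definition qint :: "'a::field \<Rightarrow> nat \<Rightarrow> 'a" where
  "qint q n = (\<Sum>i<n. q ^ i)"

definition qfact :: "'a::field \<Rightarrow> nat \<Rightarrow> 'a" where
  "qfact q n = (\<Prod>i=1..n. qint q i)"

definition qbinom :: "'a::field \<Rightarrow> nat \<Rightarrow> nat \<Rightarrow> 'a" where
  "qbinom q n k = qfact q n / (qfact q k * qfact q (n - k))"

text \<open>q-Stirling numbers of the first kind: since
  [x]_q[x-1]_q...[x-k+1]_q = q^(-binom k 2) prod_{i<k} ([x]_q - [i]_q),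
  s_{1,q}(k,l) is the coefficient of t^l in prod_{i<k} (t - [i]_q).\<close>
definition s1q :: "'a::field \<Rightarrow> nat \<Rightarrow> nat \<Rightarrow> 'a" where
  "s1q q k l = coeff (\<Prod>i<k. [:- qint q i, 1:]) l"

end

theory Submission
  imports Defs
begin


fun gb :: "'a::field \<Rightarrow> nat \<Rightarrow> nat \<Rightarrow> 'a" where
  "gb q 0 0 = 1"
| "gb q 0 (Suc k) = 0"
| "gb q (Suc n) 0 = 1"
| "gb q (Suc n) (Suc k) = gb q n k + q ^ Suc k * gb q n (Suc k)"

lemma gb_zero: "n < k \<Longrightarrow> gb q n k = 0"
proof (induction n arbitrary: k)
  case 0 then show ?case by (cases k) auto
next
  case (Suc n) then show ?case by (cases k) auto
qed

lemma qint_Suc: "qint q (Suc n) = qint q n + q ^ n"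
  by (simp add: qint_def)

lemma qint_mult: "(q - 1) * qint q i = q ^ i - 1"
  by (induction i) (auto simp: qint_def algebra_simps)

lemma qint_add: "qint q (a + b) = qint q a + q ^ a * qint q b"
  by (induction b) (auto simp: qint_def algebra_simps power_add)

lemma qfact_Suc: "qfact q (Suc n) = qfact q n * qint q (Suc n)"
  by (simp add: qfact_def)

lemma gb_qfact: "k \<le> n \<Longrightarrow> gb q n k * qfact q k * qfact q (n - k) = qfact q n"
proof (induction n arbitrary: k)
  case 0 then show ?case by (simp add: qfact_def)
next
  case (Suc n)
  show ?case
  proof (cases k)
    case 0 then show ?thesis by (simp add: qfact_def)
  next
    case (Suc j)
    have A: "gb q n j * qfact q (Suc j) * qfact q (n - j) = qfact q n * qint q (Suc j)"
      using Suc.IH[of j] Suc.prems Suc by (simp add: qfact_Suc algebra_simps)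
    have B: "q ^ Suc j * gb q n (Suc j) * qfact q (Suc j) * qfact q (n - j)
            = qfact q n * (q ^ Suc j * qint q (n - j))"
    proof (cases "Suc j \<le> n")
      case True
      have "n - j = Suc (n - Suc j)" using True by simp
      then have "qfact q (n - j) = qfact q (n - Suc j) * qint q (n - j)"
        by (simp add: qfact_Suc)
      then show ?thesis using Suc.IH[OF True] by (simp add: algebra_simps)
    next
      case False
      then have "n = j" using Suc Suc.prems by simp
      then show ?thesis using gb_zero[of n "Suc j" q] by (simp add: qint_def)
    qed
    have C: "qint q (Suc j) + q ^ Suc j * qint q (n - j) = qint q (Suc n)"
      using qint_add[of q "Suc j" "n - j"] Suc Suc.prems by simp
    have "gb q (Suc n) k * qfact q k * qfact q (Suc n - k)
        = gb q n j * qfact q (Suc j) * qfact q (n - j)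
          + q ^ Suc j * gb q n (Suc j) * qfact q (Suc j) * qfact q (n - j)"
      using Suc by (simp add: algebra_simps)
    also have "\<dots> = qfact q n * qint q (Suc n)"
      unfolding A B C[symmetric] by (simp add: algebra_simps)
    finally show ?thesis by (simp add: qfact_Suc)
  qed
qed

definition GG :: "'a::field \<Rightarrow> nat \<Rightarrow> 'a poly" where
  "GG q k = (\<Prod>i<k. [:1, q - 1:] - [:q ^ i:])"

lemma GG_Suc: "GG q (Suc k) = GG q k * ([:1, q - 1:] - [:q ^ k:])"
  by (simp add: GG_def)

lemma gauss: "(\<Sum>k\<le>n. smult (gb q n k) (GG q k)) = [:1, q - 1:] ^ n"
proof (induction n)
  case 0 then show ?case by (simp add: GG_def)
next
  case (Suc n)
  let ?Z = "[:1, q - 1:]"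
  have Zk: "?Z * GG q k = GG q (Suc k) + smult (q ^ k) (GG q k)" for k
  proof -
    have "GG q k * [:q^k:] = smult (q^k) (GG q k)" by simp
    moreover have "?Z * GG q k = GG q k * (?Z - [:q^k:]) + GG q k * [:q^k:]"
      by (metis add.commute diff_add_cancel distrib_left mult.commute)
    ultimately show ?thesis by (simp only: GG_Suc)
  qed
  have "?Z ^ Suc n = (\<Sum>k\<le>n. smult (gb q n k) (?Z * GG q k))"
    by (simp only: power_Suc Suc.IH[symmetric] sum_distrib_left mult_smult_right)
  also have "\<dots> = (\<Sum>k\<le>n. smult (gb q n k) (GG q (Suc k)))
                  + (\<Sum>k\<le>n. smult (gb q n k * q ^ k) (GG q k))"
    by (simp only: Zk smult_add_right sum.distrib smult_smult)
  also have "(\<Sum>k\<le>n. smult (gb q n k * q ^ k) (GG q k))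
      = 1 + (\<Sum>k\<le>n. smult (q ^ Suc k * gb q n (Suc k)) (GG q (Suc k)))"
  proof -
    have "(\<Sum>k\<le>Suc n. smult (gb q n k * q ^ k) (GG q k))
        = (\<Sum>k\<le>n. smult (gb q n k * q ^ k) (GG q k))"
      using gb_zero[of n "Suc n" q] by simp
    moreover have "(\<Sum>k\<le>Suc n. smult (gb q n k * q ^ k) (GG q k))
       = 1 + (\<Sum>k\<le>n. smult (gb q n (Suc k) * q ^ Suc k) (GG q (Suc k)))"
      by (subst sum.atMost_Suc_shift) (cases n, auto simp: GG_def)
    ultimately show ?thesis using gb_zero[of n "Suc n" q] by (simp add: mult.commute)
  qed
  also have "(\<Sum>k\<le>n. smult (gb q n k) (GG q (Suc k))) + (1 + (\<Sum>k\<le>n. smult (q ^ Suc k * gb q n (Suc k)) (GG q (Suc k))))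
     = 1 + (\<Sum>k\<le>n. smult (gb q (Suc n) (Suc k)) (GG q (Suc k)))"
    by (simp add: sum.distrib smult_add_left)
  also have "\<dots> = (\<Sum>k\<le>Suc n. smult (gb q (Suc n) k) (GG q k))"
    by (subst sum.atMost_Suc_shift) (simp add: GG_def)
  finally show ?case by simp
qed

definition PP :: "'a::field \<Rightarrow> nat \<Rightarrow> 'a poly" where
  "PP q k = (\<Prod>i<k. [:- qint q i, 1:])"

lemma GG_PP: "GG q k = smult ((q - 1) ^ k) (PP q k)"
proof (induction k)
  case 0 then show ?case by (simp add: GG_def PP_def)
next
  case (Suc k)
  have "[:1, q - 1:] - [:q ^ k:] = smult (q - 1) [:- qint q k, 1:]"
    using qint_mult[of q k] by (simp add: algebra_simps)
  then have "GG q (Suc k) = smult ((q - 1) ^ k) (PP q k) * smult (q - 1) [:- qint q k, 1:]"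
    using Suc by (simp only: GG_Suc)
  also have "\<dots> = smult ((q - 1) ^ Suc k) (PP q k * [:- qint q k, 1:])"
    by (simp only: mult_smult_left mult_smult_right smult_smult power_Suc mult.commute)
  also have "PP q k * [:- qint q k, 1:] = PP q (Suc k)" by (simp add: PP_def)
  finally show ?case .
qed

lemma degree_PP: "degree (PP q k) = k"
  unfolding PP_def by (subst degree_prod_eq_sum_degree) auto

lemma alg_main:
  assumes nz: "\<And>i. 1 \<le> i \<Longrightarrow> qint q i \<noteq> 0" and "m \<le> n"
  shows "of_nat (n choose m) * (q - 1) ^ m
         = (\<Sum>k=m..n. (q - 1) ^ k * qbinom q n k * s1q q k m)"
proof -
  have qf: "qfact q j \<noteq> 0" for j using nz by (auto simp: qfact_def)
  have gbq: "k \<le> n \<Longrightarrow> gb q n k = qbinom q n k" for k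
    using gb_qfact[of k n q] qf by (simp add: qbinom_def field_simps)
  have "of_nat (n choose m) * (q - 1) ^ m = coeff ([:1, q - 1:] ^ n) m"
    using coeff_linear_poly_power[OF assms(2), of 1 "q - 1"] by simp
  also have "\<dots> = (\<Sum>k\<le>n. (q - 1) ^ k * gb q n k * s1q q k m)"
    unfolding gauss[symmetric, where n=n and q=q] GG_PP
    by (simp add: coeff_sum s1q_def PP_def algebra_simps)
  also have "\<dots> = (\<Sum>k=m..n. (q - 1) ^ k * gb q n k * s1q q k m)"
  proof (rule sum.mono_neutral_right)
    show "\<forall>i\<in>{..n} - {m..n}. (q - 1) ^ i * gb q n i * s1q q i m = 0"
    proof
      fix i assume "i \<in> {..n} - {m..n}"
      then have "i < m" by auto
      then have "coeff (PP q i) m = 0" by (intro coeff_eq_0) (simp add: degree_PP)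
      then show "(q - 1) ^ i * gb q n i * s1q q i m = 0" by (simp add: s1q_def PP_def)
    qed
  qed auto
  also have "\<dots> = (\<Sum>k=m..n. (q - 1) ^ k * qbinom q n k * s1q q k m)"
    by (rule sum.cong) (auto simp: gbq)
  finally show ?thesis .
qed


definition r0 :: "nat \<Rightarrow> real" where "r0 p = real p powr (- 1 / (real p - 1))"

declare binomial_Suc_Suc[simp del]

context
  fixes p :: nat and v :: "'a::field \<Rightarrow> real"
  assumes C: "Cp_like p v" and pp: "prime p"
begin

lemma v_nn: "v x \<ge> 0" using C by (simp add: Cp_like_def)
lemma v_mult: "v (x * y) = v x * v y" using C by (simp add: Cp_like_def)
lemma v_add: "v (x + y) \<le> max (v x) (v y)" using C by (simp add: Cp_like_def)
lemma v_zero_iff: "v x = 0 \<longleftrightarrow> x = 0" using C by (simp add: Cp_like_def)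
lemma v_p: "v (of_nat p) = 1 / real p" using C by (simp add: Cp_like_def)
lemma char0: "CHAR('a) = 0" using C by (simp add: Cp_like_def)

lemma v_0: "v 0 = 0" using v_zero_iff by simp

lemma v_one: "v 1 = 1"
proof -
  have "v 1 = v 1 * v 1" using v_mult[of 1 1] by simp
  moreover have "v 1 \<noteq> 0" using v_zero_iff by simp
  ultimately show ?thesis by (metis mult_cancel_right1)
qed

lemma v_neg: "v (- x) = v x"
proof -
  have "v (-1) * v (-1) = 1" using v_mult[of "-1" "-1"] v_one by simp
  then have "v (-1) ^ 2 = 1" by (simp add: power2_eq_square)
  then have "v (-1) = 1 \<or> v (-1) = -1" by (simp add: power2_eq_1_iff)
  then have "v (-1) = 1" using v_nn[of "-1"] by auto
  then show ?thesis using v_mult[of "-1" x] by simp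
qed

lemma v_pow: "v (x ^ n) = v x ^ n"
  by (induction n) (auto simp: v_one v_mult)

lemma v_nat: "v (of_nat n) \<le> 1"
proof (induction n)
  case 0 then show ?case using v_0 by simp
next
  case (Suc n) then show ?case using v_add[of "of_nat n" 1] v_one by (simp add: add.commute)
qed

lemma v_sum_le: "finite A \<Longrightarrow> M \<ge> 0 \<Longrightarrow> (\<And>a. a \<in> A \<Longrightarrow> v (f a) \<le> M) \<Longrightarrow> v (sum f A) \<le> M"
proof (induction A rule: finite_induct)
  case empty then show ?case using v_0 by simp
next
  case (insert x F)
  have "v (f x) \<le> M" "v (sum f F) \<le> M" using insert by auto
  then show ?case using v_add[of "f x" "sum f F"] insert(1,2) by (simp add: max.boundedI order_trans)
qed

lemma v_sum_less: "finite A \<Longrightarrow> M > 0 \<Longrightarrow> (\<And>a. a \<in> A \<Longrightarrow> v (f a) < M) \<Longrightarrow> v (sum f A) < M"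
proof (induction A rule: finite_induct)
  case empty then show ?case using v_0 by simp
next
  case (insert x F)
  have "v (f x) < M" "v (sum f F) < M" using insert by auto
  then show ?case using v_add[of "f x" "sum f F"] insert(1,2) by simp
qed

lemma v_ne: "v b < v a \<Longrightarrow> a + b \<noteq> 0"
proof
  assume "v b < v a" "a + b = 0"
  then have "a = - b" by (simp add: eq_neg_iff_add_eq_0)
  then show False using \<open>v b < v a\<close> v_neg by simp
qed

lemma p_gt1: "real p > 1" using pp prime_gt_1_nat by simp

lemma v_coprime: assumes "\<not> p dvd d" shows "v (of_nat d) = 1"
proof -
  have cop: "gcd d p = 1" using prime_imp_coprime[OF pp assms]
    by (simp add: coprime_iff_gcd_eq_1 gcd.commute)
  have "d \<noteq> 0" using assms by (metis dvd_0_right)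
  then obtain x y where "d * x = p * y + gcd d p" using bezout_nat by blast
  then have "d * x = p * y + 1" using cop by simp
  then have "(of_nat d * of_nat x :: 'a) = of_nat p * of_nat y + 1"
    by (metis of_nat_1 of_nat_add of_nat_mult)
  then have e: "(1::'a) = of_nat d * of_nat x + - (of_nat p * of_nat y)" by (simp add: algebra_simps)
  have "v (1::'a) \<le> max (v (of_nat d * of_nat x :: 'a)) (v (- (of_nat p * of_nat y) :: 'a))"
    by (subst e) (rule v_add)
  then have "1 \<le> max (v (of_nat d) * v (of_nat x :: 'a)) (v (of_nat p) * v (of_nat y :: 'a))"
    by (simp only: v_one v_neg v_mult)
  moreover have "v (of_nat p) * v (of_nat y :: 'a) < 1"
  proof -
    have "v (of_nat p) * v (of_nat y :: 'a) \<le> v (of_nat p :: 'a)"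
      using v_nat[of y] v_nn[of "of_nat p"] by (simp add: mult_left_le)
    also have "\<dots> < 1" using v_p p_gt1 by simp
    finally show ?thesis .
  qed
  ultimately have "1 \<le> v (of_nat d) * v (of_nat x :: 'a)" by linarith
  also have "\<dots> \<le> v (of_nat d)" using v_nat[of x] v_nn[of "of_nat d"] by (simp add: mult_left_le)
  finally show ?thesis using v_nat[of d] by simp
qed


lemma r0_pos: "r0 p > 0" using p_gt1 by (simp add: r0_def)
lemma r0_less1: "r0 p < 1" unfolding r0_def using p_gt1 by (intro powr_less_one) (auto simp: divide_neg_pos)
lemma r0_pow: "r0 p ^ (p - 1) = 1 / real p"
proof -
  have "r0 p ^ (p - 1) = r0 p powr real (p - 1)" using r0_pos by (simp add: powr_realpow)
  also have "\<dots> = real p powr (- 1 / (real p - 1) * real (p - 1))" by (simp add: r0_def powr_powr)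
  also have "- 1 / (real p - 1) * real (p - 1) = -1" using p_gt1 by (simp add: of_nat_diff)
  finally show ?thesis using p_gt1 by (simp add: powr_neg_one)
qed

lemma prime_order_false:
  assumes l: "prime l" and w: "w ^ l = 1" "w \<noteq> 1" and vw: "v (w - 1) < r0 p"
  shows False
proof -
  define y where "y = w - 1"
  have y0: "y \<noteq> 0" using w y_def by simp
  have vy: "v y < 1" using vw r0_less1 y_def by simp
  have vy0: "0 \<le> v y" by (rule v_nn)
  obtain l' where l': "l = Suc l'" using l by (cases l) auto
  have l'1: "l' \<ge> 1" using prime_ge_2_nat[OF l] l' by simp
  define f where "f k = of_nat (l choose Suc k) * y ^ k" for k
  have "(y + 1) ^ l = (\<Sum>k\<le>l. of_nat (l choose k) * y ^ k * 1 ^ (l - k))"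
    by (rule binomial_ring)
  also have "\<dots> = 1 + (\<Sum>k\<le>l'. of_nat (l choose Suc k) * y ^ Suc k)"
    unfolding l' by (subst sum.atMost_Suc_shift) (simp add: l'[symmetric])
  also have "(\<Sum>k\<le>l'. of_nat (l choose Suc k) * y ^ Suc k) = y * sum f {..l'}"
    unfolding f_def sum_distrib_left by (intro sum.cong) (simp_all add: ac_simps)
  finally have "y * sum f {..l'} = 0" using w y_def by simp
  then have S0: "sum f {..l'} = 0" using y0 by simp
  have ins: "{..l'} = insert 0 {1..l'}" by auto
  have S: "sum f {..l'} = of_nat l + sum f {1..l'}"
    unfolding ins by (subst sum.insert) (auto simp: f_def)
  have "v (sum f {1..l'}) < v (of_nat l)"
  proof (cases "p dvd l")
    case False
    have vl: "v (of_nat l) = 1" using v_coprime[OF False] .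
    have "v (sum f {1..l'}) < 1"
    proof (rule v_sum_less)
      fix k assume k: "k \<in> {1..l'}"
      have "v (f k) = v (of_nat (l choose Suc k)) * v y ^ k" by (simp add: f_def v_mult v_pow)
      also have "\<dots> \<le> v y ^ k" by (rule mult_left_le_one_le) (use v_nat[of "l choose Suc k"] vy0 v_nn in auto)
      also have "\<dots> \<le> v y ^ 1" using k vy vy0 by (intro power_decreasing) auto
      finally show "v (f k) < 1" using vy by simp
    qed auto
    then show ?thesis using vl by simp
  next
    case True
    then have lp: "l = p" using primes_dvd_imp_eq[OF pp l] by simp
    have pinv: "v (of_nat l) = 1 / real p" using lp v_p by simp
    have "v (sum f {1..l'}) < 1 / real p"
    proof (rule v_sum_less)
      fix k assume k: "k \<in> {1..l'}"
      show "v (f k) < 1 / real p"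
      proof (cases "k = l'")
        case True
        then have "f k = y ^ (p - 1)" using l' lp by (simp add: f_def)
        then have "v (f k) = v y ^ (p - 1)" by (simp add: v_pow)
        also have "\<dots> < r0 p ^ (p - 1)" using vw y_def vy0 l' lp l'1 by (intro power_strict_mono) auto
        finally show ?thesis using r0_pow by simp
      next
        case False
        then have "Suc k < l" using k l' by auto
        then have "l dvd (l choose Suc k)" using l by (intro dvd_choose_prime) auto
        then obtain c where c: "l choose Suc k = l * c" by blast
        have "v (f k) = v (of_nat l) * v (of_nat c) * v y ^ k" by (simp add: f_def c v_mult v_pow)
        also have "\<dots> \<le> v (of_nat l) * v y ^ k"
          using v_nat[of c] v_nn[of "of_nat l"] vy0 by (simp add: mult_left_le mult_right_mono)
        also have "\<dots> < v (of_nat l) * 1"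
        proof -
          have "v y ^ k \<le> v y ^ 1" using k vy vy0 by (intro power_decreasing) auto
          then have "v y ^ k < 1" using vy by simp
          moreover have "v (of_nat l) > 0" using pinv p_gt1 by simp
          ultimately show ?thesis by simp
        qed
        finally show ?thesis using pinv by simp
      qed
    qed (use p_gt1 in auto)
    then show ?thesis using pinv by simp
  qed
  then have "sum f {..l'} \<noteq> 0" unfolding S by (intro v_ne) simp
  then show False using S0 by simp
qed

lemma qint_nz:
  assumes vq: "v (q - 1) < r0 p" and i: "1 \<le> i"
  shows "qint q i \<noteq> 0"
proof
  assume qi: "qint q i = 0"
  show False
  proof (cases "q = 1")
    case True
    then have "qint q i = of_nat i" by (simp add: qint_def)
    then show False using qi i char0 of_nat_eq_0_iff_char_dvd[of i, where 'a='a] by simp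
  next
    case False
    have qi1: "q ^ i = 1" using qint_mult[of q i] qi by simp
    define P where "P d = (0 < d \<and> q ^ d = 1)" for d
    define d where "d = (LEAST d. P d)"
    have Pi: "P i" using qi1 i by (simp add: P_def)
    have Pd: "P d" unfolding d_def by (rule LeastI[of P i, OF Pi])
    have dpos: "0 < d" and qd: "q ^ d = 1" using Pd by (simp_all add: P_def)
    have min: "\<And>e. e < d \<Longrightarrow> \<not> P e" unfolding d_def by (rule not_less_Least)
    have "d \<noteq> 1"
    proof
      assume "d = 1" then show False using qd False by simp
    qed
    then obtain l where l: "prime l" "l dvd d" using prime_factor_nat by blast
    then obtain e where e: "d = l * e" by blast
    have "e \<noteq> 0" using dpos e by (metis mult_0_right less_irrefl)
    then have "e > 0" by simp
    moreover have "e < d"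
    proof -
      have "1 < l" using prime_gt_1_nat[OF l(1)] .
      then have "1 * e < l * e" using \<open>e > 0\<close> by (intro mult_strict_right_mono) auto
      then show ?thesis using e by simp
    qed
    ultimately have w1: "q ^ e \<noteq> 1" using min P_def by auto
    have "(q ^ e) ^ l = q ^ (e * l)" by (simp only: power_mult)
    also have "e * l = d" using e by simp
    finally have wl: "(q ^ e) ^ l = 1" using qd by simp
    have vq1: "v q \<le> 1"
    proof -
      have "v q \<le> max (v (q - 1)) (v 1)" using v_add[of "q - 1" 1] by simp
      then show ?thesis using vq r0_less1 v_one by simp
    qed
    have "v (qint q e) \<le> 1" unfolding qint_def
    proof (rule v_sum_le)
      fix j assume "j \<in> {..<e}"
      show "v (q ^ j) \<le> 1" unfolding v_pow by (rule power_le_one) (use v_nn vq1 in auto)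
    qed auto
    then have "v (q ^ e - 1) \<le> v (q - 1)"
      using qint_mult[of q e] v_mult[of "q - 1" "qint q e"] v_nn[of "q - 1"] mult_left_le[of "v (qint q e)" "v (q - 1)"]
      by simp
    then show False using prime_order_false[OF l(1) wl w1] vq by simp
  qed
qed

end

theorem mainTheorem3:
  fixes p :: nat and v :: "'a::field \<Rightarrow> real" and q :: 'a and m n :: nat
  assumes "prime p" and "odd p"
    and "Cp_like p v"
    and "v (1 - q) < real p powr (- 1 / (real p - 1))"
    and "1 \<le> m" and "m \<le> n"
  shows "of_nat (n choose m) * (q - 1) ^ m
         = (\<Sum>k=m..n. (q - 1) ^ k * qbinom q n k * s1q q k m)"
proof (rule alg_main)
  have "v (q - 1) = v (1 - q)" using v_neg[OF assms(3,1), of "1 - q"] by simp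
  moreover have "r0 p = real p powr (- 1 / (real p - 1))" by (simp only: r0_def)
  ultimately have "v (q - 1) < r0 p" using assms(4) by (simp only:)
  then show "\<And>i. 1 \<le> i \<Longrightarrow> qint q i \<noteq> 0" using qint_nz[OF assms(3,1)] by blast
qed (rule assms(6))

end
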